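(* Suppose that $U=L(0)\otimes A\oplus L(2)\otimes B$. The algebra $\mathrm{Ass}^{\mathrm{TKK}}(U)$ is the quotient of $\mathrm{Ass}(U)$ by the relations given by the $\mathfrak{sl}_2$-submodule in $U^{\otimes 2}$ generated by $(e\otimes B)\otimes T(L(0)\otimes A)\otimes (e\otimes B)$, where $e$ is the highest weight vector of $L(2)$.
   Context: We work over a field $k$ of characteristic zero. For $n\ge 0$, $L(n)$ denotes the irreducible $\mathfrak{sl}_2$-module of highest weight $n$; $L(0)$ is the trivial module and $L(2)$ is the adjoint module $\mathfrak{sl}_2$ with basis $e,f,h$. The category $\mathrm{TKK}$ has as objects the completely reducible $\mathfrak{sl}_2$-modules that are direct sums of copies of $L(0)$ and $L(2)$, i.e. $L(0)\otimes A\oplus L(2)\otimes B$ for multiplicity vector spaces $A,B$, and as morphisms $\mathfrak{sl}_2$-module maps. $\mathrm{Ass}(V)=T(V)$ is the free unital associative (tensor) algebra, and $\mathrm{Ass}^{\mathrm{TKK}}(U)$ is the free unital associative algebra in $\mathrm{TKK}$ generated by $U$ (left adjoint of the forgetful functor from associative algebras in $\mathrm{TKK}$ with $\mathfrak{sl}_2$-equivariant product), which is the quotient of $T(U)$ by the ideal generated by all $\mathfrak{sl}_2$-isotypic components $L(m)$ with $m\neq 0,2$. (The generating submodule lies in $U^{\otimes(s+2)}$ for the various degrees $s$ of the middle factor.) *)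

theory Defs
  imports Main
begin

text \<open>Letters of a basis of U = L(0) (x) A + L(2) (x) B, where A has basis indexed by
  a set I and B has basis indexed by a set J:  Sc i = 1 (x) a_i,  E j = e (x) b_j,
  H j = h (x) b_j,  F j = f (x) b_j.\<close>
datatype ('i, 'j) letter = Sc 'i | E 'j | H 'j | F 'j

datatype sl2 = Eop | Hop | Fop

definition alphabet :: "'i set \<Rightarrow> 'j set \<Rightarrow> ('i, 'j) letter set" where
  "alphabet I J = Sc ` I \<union> E ` J \<union> H ` J \<union> F ` J"

text \<open>Elements of T(U): finitely supported k-valued functions on words over the alphabet
  (coefficients with respect to the basis of tensor monomials).\<close>
definition TU :: "'i set \<Rightarrow> 'j set \<Rightarrow> ((('i, 'j) letter list) \<Rightarrow> 'k::field) set" where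
  "TU I J = {v. finite {w. v w \<noteq> 0} \<and> (\<forall>w. v w \<noteq> 0 \<longrightarrow> set w \<subseteq> alphabet I J)}"

text \<open>Adjoint action of sl2 on letters: coefficient of letter d in X.c.
  [e,e]=0, [e,h]=-2e, [e,f]=h, [h,e]=2e, [h,h]=0, [h,f]=-2f, [f,e]=-h, [f,h]=2f, [f,f]=0;
  trivial action on L(0).\<close>
fun actl :: "sl2 \<Rightarrow> ('i, 'j) letter \<Rightarrow> ('i, 'j) letter \<Rightarrow> 'k::field" where
  "actl Eop (H j) d = (if d = E j then -2 else 0)"
| "actl Eop (F j) d = (if d = H j then 1 else 0)"
| "actl Hop (E j) d = (if d = E j then 2 else 0)"
| "actl Hop (F j) d = (if d = F j then -2 else 0)"
| "actl Fop (E j) d = (if d = H j then -1 else 0)"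
| "actl Fop (H j) d = (if d = F j then 2 else 0)"
| "actl _ _ _ = 0"

text \<open>Action on a tensor monomial w (derivation rule): coefficient of the monomial w'.\<close>
definition actw :: "sl2 \<Rightarrow> ('i, 'j) letter list \<Rightarrow> ('i, 'j) letter list \<Rightarrow> 'k::field" where
  "actw X w w' = (\<Sum>i<length w.
     if length w' = length w \<and> take i w' = take i w \<and> drop (Suc i) w' = drop (Suc i) w
     then actl X (w ! i) (w' ! i) else 0)"

definition act :: "sl2 \<Rightarrow> (('i, 'j) letter list \<Rightarrow> 'k::field) \<Rightarrow> (('i, 'j) letter list \<Rightarrow> 'k)" where
  "act X v = (\<lambda>w'. \<Sum>w\<in>{w. v w \<noteq> 0}. v w * actw X w w')"

definition act_seq :: "sl2 list \<Rightarrow> (('i, 'j) letter list \<Rightarrow> 'k::field) \<Rightarrow> (('i, 'j) letter list \<Rightarrow> 'k)" where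
  "act_seq xs v = foldr act xs v"

definition lspan :: "(('a \<Rightarrow> 'k::field)) set \<Rightarrow> ('a \<Rightarrow> 'k) set" where
  "lspan S = {v. \<exists>G c. finite G \<and> G \<subseteq> S \<and> v = (\<lambda>w. \<Sum>g\<in>G. c g * g w)}"

definition submod_gen :: "(('i, 'j) letter list \<Rightarrow> 'k::field) set \<Rightarrow> (('i, 'j) letter list \<Rightarrow> 'k) set" where
  "submod_gen S = lspan {act_seq xs s | xs s. s \<in> S}"

text \<open>The product u * s * v in T(U) for monomials u, v.\<close>
definition sandwich :: "'a list \<Rightarrow> 'a list \<Rightarrow> ('a list \<Rightarrow> 'k::field) \<Rightarrow> ('a list \<Rightarrow> 'k)" where
  "sandwich u v s = (\<lambda>w. if length u + length v \<le> length w \<and> take (length u) w = u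
       \<and> drop (length w - length v) w = v
     then s (drop (length u) (take (length w - length v) w)) else 0)"

definition ideal_gen :: "'i set \<Rightarrow> 'j set \<Rightarrow> (('i, 'j) letter list \<Rightarrow> 'k::field) set
    \<Rightarrow> (('i, 'j) letter list \<Rightarrow> 'k) set" where
  "ideal_gen I J S = lspan {sandwich u v s | u v s.
      set u \<subseteq> alphabet I J \<and> set v \<subseteq> alphabet I J \<and> s \<in> S}"

text \<open>Sum of all isotypic components L(m), m \<noteq> 0, 2, of T(U): spanned by the
  submodules generated by highest weight vectors of weight m, i.e. by the f^k v.\<close>
definition bad_isotypic :: "'i set \<Rightarrow> 'j set \<Rightarrow> (('i, 'j) letter list \<Rightarrow> 'k::field) set" where
  "bad_isotypic I J = lspan {act_seq (replicate n Fop) v | n v m.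
      v \<in> TU I J \<and> m \<noteq> 0 \<and> m \<noteq> (2::nat) \<and>
      act Eop v = (\<lambda>w. 0) \<and> act Hop v = (\<lambda>w. of_nat m * v w)}"

definition mono :: "'a list \<Rightarrow> ('a list \<Rightarrow> 'k::field)" where
  "mono u = (\<lambda>w. if w = u then 1 else 0)"

text \<open>(e (x) B) (x) T(L(0) (x) A) (x) (e (x) B), as a set of spanning monomials.\<close>
definition eBTAeB :: "'i set \<Rightarrow> 'j set \<Rightarrow> (('i, 'j) letter list \<Rightarrow> 'k::field) set" where
  "eBTAeB I J = {mono ([E j] @ map Sc is @ [E j']) | j is j'.
      j \<in> J \<and> j' \<in> J \<and> set is \<subseteq> I}"

end

theory Submission
  imports Defs
begin


lemma actw_len: "length w' \<noteq> length w \<Longrightarrow> actw X w w' = 0"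
  unfolding actw_def by simp

lemma sum_lessThan_add: "(\<Sum>i<(n::nat)+m. f i) = (\<Sum>i<n. f i) + (\<Sum>i<m. f (n+i))"
  by (induction m) (auto simp: add.assoc)

lemma actw_single: "actw X [c] [d] = actl X c d"
  unfolding actw_def by simp

lemma actw_split:
  assumes "length a' = length a"
  shows "actw X (a@b) (a'@b') = (if b' = b then actw X a a' else 0) + (if a' = a then actw X b b' else 0)"
proof (cases "length b' = length b")
  case False
  then show ?thesis using assms by (auto simp: actw_len)
next
  case True
  let ?f = "\<lambda>i. if length (a'@b') = length (a@b) \<and> take i (a'@b') = take i (a@b) \<and> drop (Suc i) (a'@b') = drop (Suc i) (a@b)
     then actl X ((a@b) ! i) ((a'@b') ! i) else 0"
  have "actw X (a@b) (a'@b') = (\<Sum>i<length a + length b. ?f i)"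
    unfolding actw_def by simp
  also have "\<dots> = (\<Sum>i<length a. ?f i) + (\<Sum>i<length b. ?f (length a + i))"
    by (rule sum_lessThan_add)
  also have "(\<Sum>i<length a. ?f i) = (if b' = b then actw X a a' else 0)"
  proof -
    have P: "?f i = (if b' = b then (if length a' = length a \<and> take i a' = take i a \<and> drop (Suc i) a' = drop (Suc i) a
     then actl X (a ! i) (a' ! i) else 0) else 0)" if "i < length a" for i
    proof -
      have "(drop (Suc i) a' @ b' = drop (Suc i) a @ b) \<longleftrightarrow> (drop (Suc i) a' = drop (Suc i) a \<and> b' = b)"
        using assms by (auto)
      then show ?thesis using that assms True by (auto simp: nth_append)
    qed
    have "(\<Sum>i<length a. ?f i) = (\<Sum>i<length a. (if b' = b then (if length a' = length a \<and> take i a' = take i a \<and> drop (Suc i) a' = drop (Suc i) a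
     then actl X (a ! i) (a' ! i) else 0) else 0))" by (rule sum.cong[OF refl], rule P, simp)
    then show ?thesis unfolding actw_def by (cases "b' = b") (simp_all only: if_True if_False sum.neutral_const, simp_all)
  qed
  also have "(\<Sum>i<length b. ?f (length a + i)) = (if a' = a then actw X b b' else 0)"
  proof -
    have P: "?f (length a + i) = (if a' = a then (if length b' = length b \<and> take i b' = take i b \<and> drop (Suc i) b' = drop (Suc i) b
     then actl X (b ! i) (b' ! i) else 0) else 0)" if "i < length b" for i
    proof -
      have "(a' @ take i b' = a @ take i b) \<longleftrightarrow> (a' = a \<and> take i b' = take i b)"
        using assms by auto
      then show ?thesis using that assms True by (auto simp: nth_append)
    qed
    have "(\<Sum>i<length b. ?f (length a + i)) = (\<Sum>i<length b. (if a' = a then (if length b' = length b \<and> take i b' = take i b \<and> drop (Suc i) b' = drop (Suc i) b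
     then actl X (b ! i) (b' ! i) else 0) else 0))" by (rule sum.cong[OF refl], rule P, simp)
    then show ?thesis unfolding actw_def by (cases "a' = a") (simp_all only: if_True if_False sum.neutral_const, simp_all)
  qed
  finally show ?thesis .
qed

lemma actw_cons: "actw X (c#m) (d#w) = (if w = m then actl X c d else 0) + (if d = c then actw X m w else 0)"
  using actw_split[of "[d]" "[c]" X m w, unfolded actw_single] by simp

lemma actw_snoc: "actw X (m@[c]) (w@[d]) = (if w = m then actl X c d else 0) + (if d = c then actw X m w else 0)"
proof (cases "length w = length m")
  case True
  then show ?thesis using actw_split[of w m X "[c]" "[d]"] by (auto simp: actw_single)
next
  case False
  then show ?thesis by (auto simp: actw_len)
qed

lemma actw_Nil: "actw X [] w = 0" unfolding actw_def by simp
lemma actw_Nil2: "actw X (c#m) [] = 0" unfolding actw_def by simp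


lemma sum_nz: "sum f A \<noteq> (0::'a::comm_monoid_add) \<Longrightarrow> \<exists>a\<in>A. f a \<noteq> 0"
  by (meson sum.neutral)

definition fsupp :: "('a \<Rightarrow> 'k::zero) \<Rightarrow> bool" where "fsupp v \<longleftrightarrow> finite {w. v w \<noteq> 0}"

lemma act_superset:
  assumes "finite S" "{w. v w \<noteq> 0} \<subseteq> S"
  shows "act X v w' = (\<Sum>w\<in>S. v w * actw X w w')"
  unfolding act_def
  by (rule sum.mono_neutral_left) (use assms in auto)

lemma act_lin:
  fixes c :: "_ \<Rightarrow> 'k::field"
  assumes G: "finite G" and fs: "\<forall>g\<in>G. fsupp g"
  shows "act X (\<lambda>w. \<Sum>g\<in>G. c g * g w) = (\<lambda>w'. \<Sum>g\<in>G. c g * act X g w')"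
proof
  fix w'
  define S where "S = (\<Union>g\<in>G. {w. g w \<noteq> 0})"
  have S: "finite S" using G fs unfolding S_def fsupp_def by auto
  have sub: "{w. (\<Sum>g\<in>G. c g * g w) \<noteq> 0} \<subseteq> S"
  proof
    fix w assume "w \<in> {w. (\<Sum>g\<in>G. c g * g w) \<noteq> 0}"
    then have "(\<Sum>g\<in>G. c g * g w) \<noteq> 0" by simp
    then have "\<exists>g\<in>G. c g * g w \<noteq> 0" by (rule sum_nz)
    then obtain g where "g \<in> G" "c g * g w \<noteq> 0" by blast
    then show "w \<in> S" unfolding S_def by auto
  qed
  have "act X (\<lambda>w. \<Sum>g\<in>G. c g * g w) w' = (\<Sum>w\<in>S. (\<Sum>g\<in>G. c g * g w) * actw X w w')"
    by (rule act_superset[OF S sub])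
  also have "\<dots> = (\<Sum>w\<in>S. \<Sum>g\<in>G. c g * (g w * actw X w w'))"
    by (simp add: sum_distrib_right mult.assoc)
  also have "\<dots> = (\<Sum>g\<in>G. \<Sum>w\<in>S. c g * (g w * actw X w w'))"
    by (rule sum.swap)
  also have "\<dots> = (\<Sum>g\<in>G. c g * (\<Sum>w\<in>S. g w * actw X w w'))"
    by (simp add: sum_distrib_left)
  also have "\<dots> = (\<Sum>g\<in>G. c g * act X g w')"
  proof (rule sum.cong[OF refl])
    fix g assume "g \<in> G"
    then have "{w. g w \<noteq> 0} \<subseteq> S" unfolding S_def by auto
    then have "act X g w' = (\<Sum>w\<in>S. g w * actw X w w')" by (rule act_superset[OF S])
    then show "c g * (\<Sum>w\<in>S. g w * actw X w w') = c g * act X g w'" by simp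
  qed
  finally show "act X (\<lambda>w. \<Sum>g\<in>G. c g * g w) w' = (\<Sum>g\<in>G. c g * act X g w')" .
qed

lemma act_zero: "act X (\<lambda>w. 0) = (\<lambda>w. 0)"
  unfolding act_def by simp

lemma act_mono: "act X (mono u) = actw X u"
proof
  fix w'
  have "act X (mono u) w' = (\<Sum>w\<in>{u}. mono u w * actw X w w')"
    by (rule act_superset) (auto simp: mono_def)
  then show "act X (mono u) w' = actw X u w'" by (simp add: mono_def)
qed

fun nb :: "('i,'j) letter \<Rightarrow> ('i,'j) letter list" where
  "nb (Sc i) = []"
| "nb (E j) = [E j, H j]"
| "nb (H j) = [E j, F j]"
| "nb (F j) = [H j, F j]"

lemma actl_nb: "actl X c d \<noteq> 0 \<Longrightarrow> d \<in> set (nb c)"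
  by (cases X; cases c; auto split: if_splits)

lemma actw_Nil_right: "actw X w [] = 0"
  by (cases w) (auto simp: actw_Nil actw_Nil2)

lemma fsupp_actw: "finite {w'. (actw X w w' :: 'k::field) \<noteq> 0}"
proof (induction w)
  case Nil
  then show ?case by (simp add: actw_Nil)
next
  case (Cons c m)
  have "{w'. (actw X (c#m) w' :: 'k) \<noteq> 0} \<subseteq> (\<lambda>d. d#m) ` set (nb c) \<union> Cons c ` {w'. (actw X m w' :: 'k) \<noteq> 0}"
  proof
    fix w' assume a: "w' \<in> {w'. (actw X (c#m) w' :: 'k) \<noteq> 0}"
    show "w' \<in> (\<lambda>d. d#m) ` set (nb c) \<union> Cons c ` {w'. (actw X m w' :: 'k) \<noteq> 0}"
    proof (cases w')
      case Nil
      then show ?thesis using a by (simp add: actw_Nil2)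
    next
      case (Cons d w)
      then show ?thesis using a actl_nb[of X c d] by (auto simp: actw_cons split: if_splits)
    qed
  qed
  moreover have "finite ((\<lambda>d. d#m) ` set (nb c) \<union> Cons c ` {w'. (actw X m w' :: 'k) \<noteq> 0})"
    using Cons.IH by simp
  ultimately show ?case by (rule finite_subset)
qed

lemma fsupp_act: "fsupp (v :: _ \<Rightarrow> 'k::field) \<Longrightarrow> fsupp (act X v)"
  unfolding fsupp_def
proof -
  assume f: "finite {w. v w \<noteq> 0}"
  have "{w'. act X v w' \<noteq> 0} \<subseteq> (\<Union>w\<in>{w. v w \<noteq> 0}. {w'. (actw X w w' :: 'k) \<noteq> 0})"
  proof
    fix w' assume "w' \<in> {w'. act X v w' \<noteq> 0}"
    then have "(\<Sum>w\<in>{w. v w \<noteq> 0}. v w * actw X w w') \<noteq> 0" unfolding act_def by simp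
    then have "\<exists>w\<in>{w. v w \<noteq> 0}. v w * actw X w w' \<noteq> 0" by (rule sum_nz)
    then obtain w where "w \<in> {w. v w \<noteq> 0}" "v w * actw X w w' \<noteq> 0" by blast
    then show "w' \<in> (\<Union>w\<in>{w. v w \<noteq> 0}. {w'. (actw X w w' :: 'k) \<noteq> 0})" by auto
  qed
  moreover have "finite (\<Union>w\<in>{w. v w \<noteq> 0}. {w'. (actw X w w' :: 'k) \<noteq> 0})"
    by (intro finite_UN_I f fsupp_actw)
  ultimately show "finite {w'. act X v w' \<noteq> 0}" by (rule finite_subset)
qed

lemma fsupp_mono: "fsupp (mono u :: _ \<Rightarrow> 'k::field)"
proof -
  have "{w. (mono u w :: 'k) \<noteq> 0} \<subseteq> {u}" by (auto simp: mono_def)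
  then show ?thesis unfolding fsupp_def using finite_subset by blast
qed

lemma fsupp_act_seq: "fsupp (v :: _ \<Rightarrow> 'k::field) \<Longrightarrow> fsupp (act_seq xs v)"
  by (induction xs) (auto simp: act_seq_def fsupp_act)

lemma act_seq_Cons: "act_seq (x#xs) v = act x (act_seq xs v)"
  by (simp add: act_seq_def)

lemma lspan_zero: "(\<lambda>w. 0) \<in> lspan B"
  unfolding lspan_def by (rule CollectI, rule exI[of _ "{}"]) auto

lemma lspan_base: "b \<in> B \<Longrightarrow> b \<in> lspan B"
  unfolding lspan_def by (rule CollectI, rule exI[of _ "{b}"], rule exI[of _ "\<lambda>_. 1"]) auto

lemma lspan_smult: "v \<in> lspan B \<Longrightarrow> (\<lambda>w. a * v w) \<in> lspan B"
proof -
  assume "v \<in> lspan B"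
  then obtain G c where "finite G" "G \<subseteq> B" "v = (\<lambda>w. \<Sum>g\<in>G. c g * g w)" unfolding lspan_def by auto
  then show ?thesis unfolding lspan_def
    by (intro CollectI exI[of _ G] exI[of _ "\<lambda>g. a * c g"]) (auto simp: sum_distrib_left mult.assoc)
qed

lemma lspan_add: "v \<in> lspan B \<Longrightarrow> u \<in> lspan B \<Longrightarrow> (\<lambda>w. v w + u w) \<in> lspan B"
proof -
  assume "v \<in> lspan B" "u \<in> lspan B"
  then obtain G c G' c' where G: "finite G" "G \<subseteq> B" "v = (\<lambda>w. \<Sum>g\<in>G. c g * g w)"
    and G': "finite G'" "G' \<subseteq> B" "u = (\<lambda>w. \<Sum>g\<in>G'. c' g * g w)" unfolding lspan_def by blast
  let ?d = "\<lambda>g. (if g \<in> G then c g else 0) + (if g \<in> G' then c' g else 0)"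
  have eq: "(\<lambda>w. v w + u w) = (\<lambda>w. \<Sum>g\<in>G \<union> G'. ?d g * g w)"
  proof
    fix w
    have "?d g * g w = (if g \<in> G then c g * g w else 0) + (if g \<in> G' then c' g * g w else 0)" for g
      by (simp add: distrib_right)
    then have "(\<Sum>g\<in>G \<union> G'. ?d g * g w) = (\<Sum>g\<in>G \<union> G'. (if g \<in> G then c g * g w else 0)) + (\<Sum>g\<in>G \<union> G'. (if g \<in> G' then c' g * g w else 0))"
      by (simp add: sum.distrib)
    also have "\<dots> = (\<Sum>g\<in>G. c g * g w) + (\<Sum>g\<in>G'. c' g * g w)"
      using G G' by (simp add: sum.inter_restrict[symmetric] Int_absorb1 Int_absorb2)
    finally show "v w + u w = (\<Sum>g\<in>G \<union> G'. ?d g * g w)" using G G' by simp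
  qed
  show ?thesis unfolding lspan_def
    apply (rule CollectI)
    apply (rule exI[of _ "G \<union> G'"])
    apply (rule exI[of _ ?d])
    apply (intro conjI)
    using G(1,2) G'(1,2) apply simp_all
    by (rule eq)
qed

lemma lspan_sum: "finite A \<Longrightarrow> (\<forall>a\<in>A. f a \<in> lspan B) \<Longrightarrow> (\<lambda>w. \<Sum>a\<in>A. c a * f a w) \<in> lspan B"
proof (induction A rule: finite_induct)
  case empty
  then show ?case by (simp add: lspan_zero)
next
  case (insert x F)
  then show ?case using lspan_add[OF lspan_smult[of "f x" B "c x"], of "\<lambda>w. \<Sum>a\<in>F. c a * f a w"] by simp
qed

lemma lspan_mono: "A \<subseteq> lspan B \<Longrightarrow> lspan A \<subseteq> lspan B"
proof
  fix v assume "A \<subseteq> lspan B" "v \<in> lspan A"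
  then obtain G c where "finite G" "G \<subseteq> A" "v = (\<lambda>w. \<Sum>g\<in>G. c g * g w)" unfolding lspan_def by auto
  then show "v \<in> lspan B" using lspan_sum[of G "\<lambda>g. g" B c] \<open>A \<subseteq> lspan B\<close> by auto
qed

lemma fsupp_lspan: "\<forall>b\<in>B. fsupp (b :: _ \<Rightarrow> 'k::field) \<Longrightarrow> v \<in> lspan B \<Longrightarrow> fsupp v"
proof -
  assume B: "\<forall>b\<in>B. fsupp b" "v \<in> lspan B"
  then obtain G c where G: "finite G" "G \<subseteq> B" "v = (\<lambda>w. \<Sum>g\<in>G. c g * g w)" unfolding lspan_def by auto
  have "{w. v w \<noteq> 0} \<subseteq> (\<Union>g\<in>G. {w. g w \<noteq> 0})"
  proof
    fix w assume "w \<in> {w. v w \<noteq> 0}"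
    then have "(\<Sum>g\<in>G. c g * g w) \<noteq> 0" using G(3) by simp
    then have "\<exists>g\<in>G. c g * g w \<noteq> 0" by (rule sum_nz)
    then obtain g where "g \<in> G" "c g * g w \<noteq> 0" by blast
    then show "w \<in> (\<Union>g\<in>G. {w. g w \<noteq> 0})" by auto
  qed
  moreover have "finite (\<Union>g\<in>G. {w. g w \<noteq> 0})"
    using G B unfolding fsupp_def by auto
  ultimately show ?thesis unfolding fsupp_def by (rule finite_subset)
qed


lemma sandwich_app: "sandwich u v s (u @ m @ v) = s m"
  unfolding sandwich_def by simp

lemma sandwich_notapp: assumes "\<forall>m. w \<noteq> u @ m @ v" shows "sandwich u v s w = 0"
proof (rule ccontr)
  assume "sandwich u v s w \<noteq> 0"
  then have c: "length u + length v \<le> length w" "take (length u) w = u" "drop (length w - length v) w = v"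
    unfolding sandwich_def by (auto split: if_splits)
  define m where "m = drop (length u) (take (length w - length v) w)"
  have "take (length w - length v) w = take (length u) (take (length w - length v) w) @ m"
    unfolding m_def by (rule append_take_drop_id[symmetric])
  also have "take (length u) (take (length w - length v) w) = u"
  proof -
    have "length u \<le> length w - length v" using c(1) by linarith
    then show ?thesis using c(2) by (simp add: min_absorb1)
  qed
  finally have "w = (u @ m) @ v" using c by (metis append_take_drop_id)
  then show False using assms by simp
qed

lemma sandwich_nil: "sandwich [] [] s = s"
  unfolding sandwich_def by simp

lemma sandwich_comp: "sandwich u v (sandwich u' v' s) = sandwich (u@u') (v'@v) s"
proof
  fix w
  show "sandwich u v (sandwich u' v' s) w = sandwich (u@u') (v'@v) s w"
  proof (cases "\<exists>m. w = u @ u' @ m @ v' @ v")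
    case True
    then obtain m where "w = u @ (u' @ m @ v') @ v" by auto
    have 1: "sandwich u v (sandwich u' v' s) (u @ (u' @ m @ v') @ v) = s m" by (simp only: sandwich_app)
    have 2: "sandwich (u@u') (v'@v) s ((u@u') @ m @ (v'@v)) = s m" by (simp only: sandwich_app)
    show ?thesis using 1 2 \<open>w = _\<close> by simp
  next
    case False
    show ?thesis
    proof (cases "\<exists>m. w = u @ m @ v")
      case True
      then obtain m where m: "w = u @ m @ v" by auto
      then have "\<forall>m'. m \<noteq> u' @ m' @ v'" using False by auto
      have 1: "sandwich u v (sandwich u' v' s) w = sandwich u' v' s m" unfolding m by (rule sandwich_app)
      have 2: "sandwich u' v' s m = 0" by (rule sandwich_notapp) fact
      have 3: "sandwich (u@u') (v'@v) s w = 0" by (rule sandwich_notapp) (use \<open>\<not> (\<exists>m. w = u @ u' @ m @ v' @ v)\<close> in auto)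
      show ?thesis using 1 2 3 by simp
    next
      case False
      then show ?thesis using \<open>\<not> (\<exists>m. w = u @ u' @ m @ v' @ v)\<close> by (simp add: sandwich_notapp)
    qed
  qed
qed

lemma sandwich_lin: "sandwich u v (\<lambda>w. \<Sum>g\<in>G. c g * g w) = (\<lambda>w. \<Sum>g\<in>G. c g * sandwich u v g w)"
proof
  fix w show "sandwich u v (\<lambda>w. \<Sum>g\<in>G. c g * g w) w = (\<Sum>g\<in>G. c g * sandwich u v g w)"
    by (cases "\<exists>m. w = u @ m @ v") (auto simp: sandwich_app sandwich_notapp)
qed

lemma sandwich_mono: "sandwich u v (mono m) = mono (u @ m @ v)"
proof
  fix w show "sandwich u v (mono m) w = mono (u @ m @ v) w"
    by (cases "\<exists>m. w = u @ m @ v") (auto simp: sandwich_app sandwich_notapp mono_def split: if_splits)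
qed

lemma fsupp_sandwich: "fsupp s \<Longrightarrow> fsupp (sandwich u v s)"
proof -
  assume "fsupp s"
  have "{w. sandwich u v s w \<noteq> 0} \<subseteq> (\<lambda>m. u @ m @ v) ` {w. s w \<noteq> 0}"
  proof
    fix w assume a: "w \<in> {w. sandwich u v s w \<noteq> 0}"
    have "\<exists>m. w = u @ m @ v"
    proof (rule ccontr)
      assume "\<not> (\<exists>m. w = u @ m @ v)"
      then have "sandwich u v s w = 0" by (intro sandwich_notapp) blast
      with a show False by simp
    qed
    then obtain m where m: "w = u @ m @ v" by blast
    have "s m \<noteq> 0" using a sandwich_app[of u v s m] unfolding m by simp
    then show "w \<in> (\<lambda>m. u @ m @ v) ` {w. s w \<noteq> 0}" using m by blast
  qed
  then show ?thesis using \<open>fsupp s\<close> unfolding fsupp_def by (auto intro: finite_subset)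
qed

lemma lmul_Cons: "sandwich [c] [] y (d#w) = (if d = c then y w else 0)"
proof (cases "d = c")
  case True
  have "sandwich [c] [] y ([c] @ w @ []) = y w" by (rule sandwich_app)
  then show ?thesis using True by simp
next
  case False
  have "sandwich [c] [] y (d#w) = 0" by (rule sandwich_notapp) (use False in simp)
  then show ?thesis using False by simp
qed

lemma lmul_Nil: "sandwich [c] [] y [] = 0"
  by (rule sandwich_notapp) simp

lemma rmul_snoc: "sandwich [] [c] y (w@[d]) = (if d = c then y w else 0)"
proof (cases "d = c")
  case True
  have "sandwich [] [c] y ([] @ w @ [c]) = y w" by (rule sandwich_app)
  then show ?thesis using True by simp
next
  case False
  have "sandwich [] [c] y (w@[d]) = 0" by (rule sandwich_notapp) (use False in simp)
  then show ?thesis using False by simp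
qed

lemma rmul_Nil: "sandwich [] [c] y [] = 0"
  by (rule sandwich_notapp) simp

lemma actl_nb': "d \<notin> set (nb c) \<Longrightarrow> actl X c d = 0"
  using actl_nb by blast

lemma sum_nb: "(\<Sum>d'\<in>set (nb c). actl X c d' * (if d = d' then a else 0)) = (actl X c d * a :: 'k::field)"
proof (cases "d \<in> set (nb c)")
  case True
  then show ?thesis by (simp add: if_distrib[of "\<lambda>x. _ * x"] sum.delta cong: if_cong)
next
  case False
  then have "actl X c d = (0::'k)" using actl_nb by blast
  then show ?thesis using False by (auto intro!: sum.neutral)
qed

lemma act_lmul:
  fixes y :: "_ \<Rightarrow> 'k::field"
  assumes fs: "fsupp y"
  shows "act X (sandwich [c] [] y) = (\<lambda>w. sandwich [c] [] (act X y) w + (\<Sum>d\<in>set (nb c). actl X c d * sandwich [d] [] y w))"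
proof
  fix w'
  define S where "S = {w. y w \<noteq> 0}"
  have S: "finite S" using fs unfolding S_def fsupp_def .
  have sub: "{w. sandwich [c] [] y w \<noteq> 0} \<subseteq> Cons c ` S"
  proof
    fix w assume a: "w \<in> {w. sandwich [c] [] y w \<noteq> 0}"
    then show "w \<in> Cons c ` S" unfolding S_def
      by (cases w) (auto simp: lmul_Cons lmul_Nil split: if_splits)
  qed
  have "act X (sandwich [c] [] y) w' = (\<Sum>w\<in>Cons c ` S. sandwich [c] [] y w * actw X w w')"
    by (rule act_superset) (use S sub in auto)
  also have "\<dots> = (\<Sum>m\<in>S. y m * actw X (c#m) w')"
    by (subst sum.reindex) (auto simp: lmul_Cons)
  also have "\<dots> = sandwich [c] [] (act X y) w' + (\<Sum>d\<in>set (nb c). actl X c d * sandwich [d] [] y w')"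
  proof (cases w')
    case Nil
    then show ?thesis by (simp add: actw_Nil2 lmul_Nil)
  next
    case (Cons d w)
    have "(\<Sum>m\<in>S. y m * actw X (c#m) w') = (\<Sum>m\<in>S. (if w = m then y m * actl X c d else 0)) + (if d = c then (\<Sum>m\<in>S. y m * actw X m w) else 0)"
      unfolding Cons actw_cons by (simp add: distrib_left sum.distrib if_distrib[of "\<lambda>x. _ * x"] cong: if_cong)
    also have "(\<Sum>m\<in>S. (if w = m then y m * actl X c d else 0)) = y w * actl X c d"
      using S by (auto simp: sum.delta S_def)
    also have "(\<Sum>m\<in>S. y m * actw X m w) = act X y w"
      by (rule act_superset[symmetric]) (use S in \<open>auto simp: S_def\<close>)
    finally show ?thesis unfolding Cons
      by (simp add: actl_nb'  lmul_Cons sum_nb[of X c d "y w"] if_distrib[of "\<lambda>x. _ * x"] mult.commute cong: if_cong)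
  qed
  finally show "act X (sandwich [c] [] y) w' = sandwich [c] [] (act X y) w' + (\<Sum>d\<in>set (nb c). actl X c d * sandwich [d] [] y w')" .
qed


lemma act_rmul:
  fixes y :: "_ \<Rightarrow> 'k::field"
  assumes fs: "fsupp y"
  shows "act X (sandwich [] [c] y) = (\<lambda>w. sandwich [] [c] (act X y) w + (\<Sum>d\<in>set (nb c). actl X c d * sandwich [] [d] y w))"
proof
  fix w'
  define S where "S = {w. y w \<noteq> 0}"
  have S: "finite S" using fs unfolding S_def fsupp_def .
  have sub: "{w. sandwich [] [c] y w \<noteq> 0} \<subseteq> (\<lambda>m. m @ [c]) ` S"
  proof
    fix w assume a: "w \<in> {w. sandwich [] [c] y w \<noteq> 0}"
    show "w \<in> (\<lambda>m. m @ [c]) ` S"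
    proof (cases w rule: rev_exhaust)
      case Nil
      then show ?thesis using a by (simp add: rmul_Nil)
    next
      case (snoc w0 d)
      then show ?thesis using a unfolding S_def by (simp add: rmul_snoc split: if_splits)
    qed
  qed
  have inj: "inj_on (\<lambda>m. m @ [c]) S" by (auto simp: inj_on_def)
  have "act X (sandwich [] [c] y) w' = (\<Sum>w\<in>(\<lambda>m. m @ [c]) ` S. sandwich [] [c] y w * actw X w w')"
    by (rule act_superset) (use S sub in auto)
  also have "\<dots> = (\<Sum>m\<in>S. y m * actw X (m @ [c]) w')"
    by (subst sum.reindex[OF inj]) (simp add: rmul_snoc)
  also have "\<dots> = sandwich [] [c] (act X y) w' + (\<Sum>d\<in>set (nb c). actl X c d * sandwich [] [d] y w')"
  proof (cases w' rule: rev_exhaust)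
    case Nil
    then show ?thesis by (simp add: actw_Nil_right rmul_Nil)
  next
    case (snoc w d)
    have "(\<Sum>m\<in>S. y m * actw X (m @ [c]) w') = (\<Sum>m\<in>S. (if w = m then y m * actl X c d else 0)) + (if d = c then (\<Sum>m\<in>S. y m * actw X m w) else 0)"
      unfolding snoc actw_snoc by (simp add: distrib_left sum.distrib if_distrib[of "\<lambda>x. _ * x"] cong: if_cong)
    also have "(\<Sum>m\<in>S. (if w = m then y m * actl X c d else 0)) = y w * actl X c d"
      using S by (auto simp: sum.delta S_def)
    also have "(\<Sum>m\<in>S. y m * actw X m w) = act X y w"
      by (rule act_superset[symmetric]) (use S in \<open>auto simp: S_def\<close>)
    finally show ?thesis unfolding snoc
      by (simp add: actl_nb' rmul_snoc sum_nb[of X c d "y w"] if_distrib[of "\<lambda>x. _ * x"] mult.commute cong: if_cong)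
  qed
  finally show "act X (sandwich [] [c] y) w' = sandwich [] [c] (act X y) w' + (\<Sum>d\<in>set (nb c). actl X c d * sandwich [] [d] y w')" .
qed

lemma nb_alph: "c \<in> alphabet I J \<Longrightarrow> d \<in> set (nb c) \<Longrightarrow> d \<in> alphabet I J"
  by (cases c) (auto simp: alphabet_def)

lemma ideal_add: "x \<in> ideal_gen I J S \<Longrightarrow> y \<in> ideal_gen I J S \<Longrightarrow> (\<lambda>w. x w + y w) \<in> ideal_gen I J S"
  unfolding ideal_gen_def by (rule lspan_add)

lemma ideal_smult: "x \<in> ideal_gen I J S \<Longrightarrow> (\<lambda>w. a * x w) \<in> ideal_gen I J S"
  unfolding ideal_gen_def by (rule lspan_smult)

lemma ideal_sum: "finite A \<Longrightarrow> (\<forall>a\<in>A. f a \<in> ideal_gen I J S) \<Longrightarrow> (\<lambda>w. \<Sum>a\<in>A. c a * f a w) \<in> ideal_gen I J S"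
  unfolding ideal_gen_def by (rule lspan_sum)

lemma ideal_gen_gen: "s \<in> S \<Longrightarrow> set u \<subseteq> alphabet I J \<Longrightarrow> set v \<subseteq> alphabet I J \<Longrightarrow> sandwich u v s \<in> ideal_gen I J S"
  unfolding ideal_gen_def by (rule lspan_base) blast

lemma ideal_gen_base: "s \<in> S \<Longrightarrow> s \<in> ideal_gen I J S"
  using ideal_gen_gen[of s S "[]" I J "[]"] by (simp add: sandwich_nil)

lemma ideal_gen_sandwich:
  assumes x: "x \<in> ideal_gen I J S" and u: "set u \<subseteq> alphabet I J" and v: "set v \<subseteq> alphabet I J"
  shows "sandwich u v x \<in> ideal_gen I J S"
proof -
  obtain G c where G: "finite G" "G \<subseteq> {sandwich u v s | u v s. set u \<subseteq> alphabet I J \<and> set v \<subseteq> alphabet I J \<and> s \<in> S}"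
    "x = (\<lambda>w. \<Sum>g\<in>G. c g * g w)"
    using x unfolding ideal_gen_def lspan_def by blast
  have "sandwich u v x = (\<lambda>w. \<Sum>g\<in>G. c g * sandwich u v g w)"
    unfolding G(3) by (rule sandwich_lin)
  moreover have "\<forall>g\<in>G. sandwich u v g \<in> ideal_gen I J S"
  proof
    fix g assume "g \<in> G"
    then obtain u' v' s where g: "g = sandwich u' v' s" "set u' \<subseteq> alphabet I J" "set v' \<subseteq> alphabet I J" "s \<in> S"
      using G(2) by blast
    have "sandwich u v g = sandwich (u@u') (v'@v) s" unfolding g(1) by (rule sandwich_comp)
    moreover have "sandwich (u@u') (v'@v) s \<in> ideal_gen I J S"
      by (rule ideal_gen_gen) (use g u v in auto)
    ultimately show "sandwich u v g \<in> ideal_gen I J S" by simp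
  qed
  ultimately show ?thesis using ideal_sum[OF G(1), of "\<lambda>g. sandwich u v g"] by simp
qed

lemma ideal_gen_subset:
  assumes "S \<subseteq> ideal_gen I J T"
  shows "ideal_gen I J S \<subseteq> ideal_gen I J T"
proof -
  have "{sandwich u v s | u v s. set u \<subseteq> alphabet I J \<and> set v \<subseteq> alphabet I J \<and> s \<in> S} \<subseteq> ideal_gen I J T"
  proof
    fix x assume "x \<in> {sandwich u v s | u v s. set u \<subseteq> alphabet I J \<and> set v \<subseteq> alphabet I J \<and> s \<in> S}"
    then obtain u v s where x: "x = sandwich u v s" "set u \<subseteq> alphabet I J" "set v \<subseteq> alphabet I J" "s \<in> S" by blast
    have "s \<in> ideal_gen I J T" using x(4) assms by blast
    then show "x \<in> ideal_gen I J T" unfolding x(1) by (rule ideal_gen_sandwich) (use x in auto)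
  qed
  then have "lspan {sandwich u v s | u v s. set u \<subseteq> alphabet I J \<and> set v \<subseteq> alphabet I J \<and> s \<in> S} \<subseteq> ideal_gen I J T"
    unfolding ideal_gen_def[of I J T] by (rule lspan_mono)
  then show ?thesis unfolding ideal_gen_def[of I J S] .
qed

lemma ideal_act_gen:
  fixes S :: "(('i,'j) letter list \<Rightarrow> 'k::field) set"
  assumes fsS: "\<forall>s\<in>S. fsupp s" and clS: "\<forall>s\<in>S. act X s \<in> ideal_gen I J S"
    and s: "s \<in> S" and u: "set u \<subseteq> alphabet I J"
  shows "set v \<subseteq> alphabet I J \<Longrightarrow> act X (sandwich u v s) \<in> ideal_gen I J S"
  using u
proof (induction u arbitrary: v)
  case Nil
  show ?case using Nil(1)
  proof (induction v rule: rev_induct)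
    case Nil
    then show ?case using clS s by (simp add: sandwich_nil)
  next
    case (snoc c v)
    define y where "y = sandwich [] v s"
    have fy: "fsupp y" unfolding y_def using fsS s by (simp add: fsupp_sandwich)
    have eq: "sandwich [] (v@[c]) s = sandwich [] [c] y"
      unfolding y_def using sandwich_comp[of "[]" "[c]" "[]" v s] by simp
    have c: "c \<in> alphabet I J" and v: "set v \<subseteq> alphabet I J" using snoc(2) by auto
    have 1: "sandwich [] [c] (act X y) \<in> ideal_gen I J S"
      by (rule ideal_gen_sandwich) (use snoc(1)[OF v] c in \<open>auto simp: y_def\<close>)
    have 2: "\<forall>d\<in>set (nb c). sandwich [] [d] y \<in> ideal_gen I J S"
    proof
      fix d assume d: "d \<in> set (nb c)"
      have "sandwich [] [d] y = sandwich [] (v@[d]) s"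
        unfolding y_def using sandwich_comp[of "[]" "[d]" "[]" v s] by simp
      moreover have "sandwich [] (v@[d]) s \<in> ideal_gen I J S"
        by (rule ideal_gen_gen) (use s v nb_alph[OF c d] in auto)
      ultimately show "sandwich [] [d] y \<in> ideal_gen I J S" by simp
    qed
    show ?case unfolding eq act_rmul[OF fy]
      by (rule ideal_add[OF 1 ideal_sum[OF _ 2]]) simp
  qed
next
  case (Cons c u)
  define y where "y = sandwich u v s"
  have fy: "fsupp y" unfolding y_def using fsS s by (simp add: fsupp_sandwich)
  have eq: "sandwich (c#u) v s = sandwich [c] [] y"
    unfolding y_def using sandwich_comp[of "[c]" "[]" u v s] by simp
  have c: "c \<in> alphabet I J" and u: "set u \<subseteq> alphabet I J" using Cons(3) by auto
  have 1: "sandwich [c] [] (act X y) \<in> ideal_gen I J S"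
    by (rule ideal_gen_sandwich) (use Cons(1)[OF Cons(2) u] c in \<open>auto simp: y_def\<close>)
  have 2: "\<forall>d\<in>set (nb c). sandwich [d] [] y \<in> ideal_gen I J S"
  proof
    fix d assume d: "d \<in> set (nb c)"
    have "sandwich [d] [] y = sandwich (d#u) v s"
      unfolding y_def using sandwich_comp[of "[d]" "[]" u v s] by simp
    moreover have "sandwich (d#u) v s \<in> ideal_gen I J S"
      by (rule ideal_gen_gen) (use s u Cons(2) nb_alph[OF c d] in auto)
    ultimately show "sandwich [d] [] y \<in> ideal_gen I J S" by simp
  qed
  show ?case unfolding eq act_lmul[OF fy]
    by (rule ideal_add[OF 1 ideal_sum[OF _ 2]]) simp
qed

lemma ideal_act:
  fixes S :: "(('i,'j) letter list \<Rightarrow> 'k::field) set"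
  assumes fsS: "\<forall>s\<in>S. fsupp s" and clS: "\<forall>s\<in>S. act X s \<in> ideal_gen I J S"
    and x: "x \<in> ideal_gen I J S"
  shows "act X x \<in> ideal_gen I J S"
proof -
  let ?Gs = "{sandwich u v s | u v s. set u \<subseteq> alphabet I J \<and> set v \<subseteq> alphabet I J \<and> s \<in> S}"
  obtain G c where G: "finite G" "G \<subseteq> ?Gs" "x = (\<lambda>w. \<Sum>g\<in>G. c g * g w)"
    using x unfolding ideal_gen_def lspan_def by blast
  have fsG: "\<forall>g\<in>G. fsupp g"
  proof
    fix g assume "g \<in> G"
    then obtain u v s where "g = sandwich u v s" "s \<in> S" using G(2) by blast
    then show "fsupp g" using fsS by (simp add: fsupp_sandwich)
  qed
  have "act X x = (\<lambda>w. \<Sum>g\<in>G. c g * act X g w)"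
    unfolding G(3) by (rule act_lin[OF G(1) fsG])
  moreover have "\<forall>g\<in>G. act X g \<in> ideal_gen I J S"
  proof
    fix g assume "g \<in> G"
    then obtain u v s where g: "g = sandwich u v s" "set u \<subseteq> alphabet I J" "set v \<subseteq> alphabet I J" "s \<in> S"
      using G(2) by blast
    show "act X g \<in> ideal_gen I J S" unfolding g(1)
      by (rule ideal_act_gen[OF fsS clS g(4) g(2) g(3)])
  qed
  ultimately show ?thesis using ideal_sum[OF G(1), of "\<lambda>g. act X g"] by simp
qed

lemma submod_base: "s \<in> S0 \<Longrightarrow> act_seq xs s \<in> submod_gen S0"
  unfolding submod_gen_def by (rule lspan_base) blast

lemma submod_fsupp:
  assumes "\<forall>s\<in>S0. fsupp (s :: _ \<Rightarrow> 'k::field)" "m \<in> submod_gen S0"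
  shows "fsupp m"
proof -
  have "\<forall>b\<in>{act_seq xs s | xs s. s \<in> S0}. fsupp b"
    using assms(1) by (auto intro: fsupp_act_seq)
  then show ?thesis using assms(2) unfolding submod_gen_def by (rule fsupp_lspan)
qed

lemma submod_act:
  assumes fs: "\<forall>s\<in>S0. fsupp (s :: _ \<Rightarrow> 'k::field)" and m: "m \<in> submod_gen S0"
  shows "act X m \<in> submod_gen S0"
proof -
  let ?Gs = "{act_seq xs s | xs s. s \<in> S0}"
  obtain G c where G: "finite G" "G \<subseteq> ?Gs" "m = (\<lambda>w. \<Sum>g\<in>G. c g * g w)"
    using m unfolding submod_gen_def lspan_def by blast
  have fsG: "\<forall>g\<in>G. fsupp g"
  proof
    fix g assume "g \<in> G"
    then obtain xs s where "g = act_seq xs s" "s \<in> S0" using G(2) by blast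
    then show "fsupp g" using fs by (simp add: fsupp_act_seq)
  qed
  have "act X m = (\<lambda>w. \<Sum>g\<in>G. c g * act X g w)"
    unfolding G(3) by (rule act_lin[OF G(1) fsG])
  moreover have "\<forall>g\<in>G. act X g \<in> submod_gen S0"
  proof
    fix g assume "g \<in> G"
    then obtain xs s where g: "g = act_seq xs s" "s \<in> S0" using G(2) by blast
    have "act X g = act_seq (X#xs) s" unfolding g(1) by (simp add: act_seq_Cons)
    then show "act X g \<in> submod_gen S0" using submod_base[OF g(2)] by simp
  qed
  ultimately show ?thesis unfolding submod_gen_def using lspan_sum[OF G(1), of "\<lambda>g. act X g"] by simp
qed

lemma R_act:
  fixes S0 :: "(('i,'j) letter list \<Rightarrow> 'k::field) set"
  assumes fs: "\<forall>s\<in>S0. fsupp s" and x: "x \<in> ideal_gen I J (submod_gen S0)"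
  shows "act X x \<in> ideal_gen I J (submod_gen S0)"
proof (rule ideal_act[OF _ _ x])
  show "\<forall>s\<in>submod_gen S0. fsupp s" using submod_fsupp[OF fs] by blast
  show "\<forall>s\<in>submod_gen S0. act X s \<in> ideal_gen I J (submod_gen S0)"
    using submod_act[OF fs] ideal_gen_base by blast
qed


lemma UNIV_sl2: "(UNIV :: sl2 set) = {Eop, Hop, Fop}"
  using sl2.exhaust by auto

instance sl2 :: finite
  by standard (simp add: UNIV_sl2)

fun lt :: "sl2 \<Rightarrow> 'j \<Rightarrow> ('i,'j) letter" where
  "lt Eop j = E j" | "lt Hop j = H j" | "lt Fop j = F j"

definition ad :: "sl2 \<Rightarrow> sl2 \<Rightarrow> sl2 \<Rightarrow> 'k::field" where
  "ad Z X Y = actl Z (lt X () :: (unit,unit) letter) (lt Y ())"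

lemma actl_lt_lt: "actl Z (lt X j) (lt Y j) = ad Z X Y"
  unfolding ad_def by (cases Z; cases X; cases Y; simp)

lemma actl_lt: "actl Z (lt X j) d = (\<Sum>Y\<in>UNIV. if d = lt Y j then ad Z X Y else 0)"
  unfolding ad_def UNIV_sl2 by (cases Z; cases X; cases d; simp)

lemma lt_eq: "lt X j = lt Y j' \<longleftrightarrow> X = Y \<and> j = j'"
  by (cases X; cases Y; simp)

lemma lt_neq_Sc: "lt X j \<noteq> Sc i"
  by (cases X) auto

lemma actl_Sc: "actl Z (Sc i) d = 0"
  by (cases Z) auto

lemma actw_Sc: "actw Z (map Sc ks) w = 0"
proof (induction "ks" arbitrary: w)
  case Nil
  then show ?case by (simp add: actw_Nil)
next
  case (Cons i ks)
  then show ?case by (cases w) (auto simp: actw_cons actw_Nil2 actl_Sc)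
qed

definition word :: "'j \<Rightarrow> 'j \<Rightarrow> 'i list \<Rightarrow> sl2 \<Rightarrow> sl2 \<Rightarrow> ('i,'j) letter list" where
  "word j j' ks X Y = lt X j # map Sc ks @ [lt Y j']"

lemma word_eq: "word j j' ks X Y = word j j' ks X' Y' \<longleftrightarrow> X = X' \<and> Y = Y'"
  unfolding word_def by (simp add: lt_eq)

lemma mono_word_cons: "length ms = length ks \<Longrightarrow> (mono (word j j' ks X Y) (a # ms @ [b]) :: 'k::field) =
   (if a = lt X j \<and> ms = map Sc ks \<and> b = lt Y j' then 1 else 0)"
  unfolding word_def mono_def by auto

lemma actw_word:
  "(actw Z (word j j' ks X Y) w' :: 'k::field) =
     (\<Sum>X'\<in>UNIV. ad Z X X' * mono (word j j' ks X' Y) w') + (\<Sum>Y'\<in>UNIV. ad Z Y Y' * mono (word j j' ks X Y') w')"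
proof (cases "length w' = length (word j j' ks X Y)")
  case False
  have "\<And>X Y. (mono (word j j' ks X Y) w' :: 'k) = 0"
    using False unfolding mono_def word_def by auto
  then show ?thesis using False by (simp add: actw_len)
next
  case True
  then obtain a r where ar: "w' = a # r" unfolding word_def by (cases w') auto
  with True obtain ms b where msb: "r = ms @ [b]" unfolding word_def by (cases r rule: rev_exhaust) auto
  have len: "length ms = length ks" using True unfolding ar msb word_def by simp
  have "actw Z (word j j' ks X Y) w' =
     (if ms = map Sc ks \<and> b = lt Y j' then actl Z (lt X j) a else 0) +
     (if a = lt X j \<and> ms = map Sc ks then actl Z (lt Y j') b else 0)"
    unfolding word_def ar msb actw_cons actw_snoc by (simp add: actw_Sc)
  also have "\<dots> = (\<Sum>X'\<in>UNIV. ad Z X X' * mono (word j j' ks X' Y) w') + (\<Sum>Y'\<in>UNIV. ad Z Y Y' * mono (word j j' ks X Y') w')"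
    unfolding ar msb mono_word_cons[OF len] actl_lt
    by (auto simp: if_distrib[of "\<lambda>x. _ * x"] cong: if_cong intro!: sum.cong)
  finally show ?thesis .
qed


definition vec :: "'j \<Rightarrow> 'j \<Rightarrow> 'i list \<Rightarrow> (sl2 \<Rightarrow> sl2 \<Rightarrow> 'k::field) \<Rightarrow> (('i,'j) letter list \<Rightarrow> 'k)" where
  "vec j j' ks c = (\<lambda>w. \<Sum>X\<in>UNIV. \<Sum>Y\<in>UNIV. c X Y * mono (word j j' ks X Y) w)"

definition D :: "sl2 \<Rightarrow> (sl2 \<Rightarrow> sl2 \<Rightarrow> 'k::field) \<Rightarrow> sl2 \<Rightarrow> sl2 \<Rightarrow> 'k" where
  "D Z c X' Y' = (\<Sum>X\<in>UNIV. c X Y' * ad Z X X') + (\<Sum>Y\<in>UNIV. c X' Y * ad Z Y Y')"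

lemma vec_word: "vec j j' ks c (word j j' ks X Y) = c X Y"
  unfolding vec_def mono_def word_eq by (cases X; cases Y; simp add: UNIV_sl2)

lemma vec_supp: "{w. vec j j' ks c w \<noteq> 0} \<subseteq> (\<lambda>(X,Y). word j j' ks X Y) ` (UNIV \<times> UNIV)"
proof
  fix w assume "w \<in> {w. vec j j' ks c w \<noteq> 0}"
  then have "(\<Sum>X\<in>UNIV. \<Sum>Y\<in>UNIV. c X Y * mono (word j j' ks X Y) w) \<noteq> 0" unfolding vec_def by simp
  then have "\<exists>X\<in>UNIV. (\<Sum>Y\<in>UNIV. c X Y * mono (word j j' ks X Y) w) \<noteq> 0" by (rule sum_nz)
  then obtain X where "(\<Sum>Y\<in>UNIV. c X Y * mono (word j j' ks X Y) w) \<noteq> 0" by blast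
  then have "\<exists>Y\<in>UNIV. c X Y * mono (word j j' ks X Y) w \<noteq> 0" by (rule sum_nz)
  then obtain Y where "c X Y * mono (word j j' ks X Y) w \<noteq> 0" by blast
  then have "w = word j j' ks X Y" unfolding mono_def by (simp split: if_splits)
  then show "w \<in> (\<lambda>(X,Y). word j j' ks X Y) ` (UNIV \<times> UNIV)" by auto
qed

lemma vec_fsupp: "fsupp (vec j j' ks c)"
  unfolding fsupp_def by (rule finite_subset[OF vec_supp]) simp

lemma act_vec: "act Z (vec j j' ks c) = vec j j' ks (D Z c)"
proof
  fix w'
  let ?W = "(\<lambda>(X,Y). word j j' ks X Y) ` (UNIV \<times> UNIV)"
  have inj: "inj_on (\<lambda>(X,Y). word j j' ks X Y) (UNIV \<times> UNIV)"
    by (auto simp: inj_on_def word_eq)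
  have "act Z (vec j j' ks c) w' = (\<Sum>w\<in>?W. vec j j' ks c w * actw Z w w')"
    by (rule act_superset[OF _ vec_supp]) simp
  also have "\<dots> = (\<Sum>p\<in>UNIV \<times> UNIV. c (fst p) (snd p) * actw Z (word j j' ks (fst p) (snd p)) w')"
    by (subst sum.reindex[OF inj]) (auto simp: vec_word intro!: sum.cong)
  also have "\<dots> = (\<Sum>X\<in>UNIV. \<Sum>Y\<in>UNIV. c X Y * actw Z (word j j' ks X Y) w')"
    by (simp add: sum.cartesian_product split_beta)
  also have "\<dots> = vec j j' ks (D Z c) w'"
    unfolding actw_word vec_def D_def UNIV_sl2
    by (simp add: algebra_simps)
  finally show "act Z (vec j j' ks c) w' = vec j j' ks (D Z c) w'" .
qed


definition cc :: "nat \<Rightarrow> sl2 \<Rightarrow> sl2 \<Rightarrow> 'k::field" where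
  "cc n X Y = (if n = 0 then (if X = Eop \<and> Y = Eop then 1 else 0)
    else if n = 1 then (if (X = Hop \<and> Y = Eop) \<or> (X = Eop \<and> Y = Hop) then -1 else 0)
    else if n = 2 then (if X = Hop \<and> Y = Hop then 2 else if (X = Fop \<and> Y = Eop) \<or> (X = Eop \<and> Y = Fop) then -2 else 0)
    else if n = 3 then (if (X = Fop \<and> Y = Hop) \<or> (X = Hop \<and> Y = Fop) then 6 else 0)
    else if n = 4 then (if X = Fop \<and> Y = Fop then 24 else 0)
    else 0)"

lemma D_F_cc: "D Fop (cc n) = (cc (Suc n) :: sl2 \<Rightarrow> sl2 \<Rightarrow> 'k::field)"
proof (intro ext)
  fix X Y
  consider "n = 0" | "n = 1" | "n = 2" | "n = 3" | "n = 4" | "n \<ge> 5" by linarith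
  then show "D Fop (cc n) X Y = (cc (Suc n) X Y :: 'k)"
    by cases (cases X; cases Y; simp add: D_def cc_def ad_def UNIV_sl2)+
qed

lemma D_H_cc: "D Hop (cc n) = (\<lambda>X Y. (4 - 2 * of_nat n) * (cc n X Y :: 'k::field))"
proof (intro ext)
  fix X Y
  consider "n = 0" | "n = 1" | "n = 2" | "n = 3" | "n = 4" | "n \<ge> 5" by linarith
  then show "D Hop (cc n) X Y = (4 - 2 * of_nat n) * (cc n X Y :: 'k)"
    by cases (cases X; cases Y; simp add: D_def cc_def ad_def UNIV_sl2)+
qed

lemma D_E_cc: "D Eop (cc (Suc n)) = (\<lambda>X Y. of_nat ((Suc n) * (4 - n)) * (cc n X Y :: 'k::field))"
proof (intro ext)
  fix X Y
  consider "n = 0" | "n = 1" | "n = 2" | "n = 3" | "n = 4" | "n \<ge> 5" by linarith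
  then show "D Eop (cc (Suc n)) X Y = of_nat ((Suc n) * (4 - n)) * (cc n X Y :: 'k)"
    by cases (cases X; cases Y; simp add: D_def cc_def ad_def UNIV_sl2)+
qed

lemma D_E_cc0: "D Eop (cc 0) = (\<lambda>X Y. 0 :: 'k::field)"
proof (intro ext)
  fix X Y
  show "D Eop (cc 0) X Y = (0 :: 'k)"
    by (cases X; cases Y; simp add: D_def cc_def ad_def UNIV_sl2)
qed


definition spanc :: "(nat \<Rightarrow> 'k::field) \<Rightarrow> sl2 \<Rightarrow> sl2 \<Rightarrow> 'k" where
  "spanc a = (\<lambda>X Y. \<Sum>n<5. a n * cc n X Y)"

fun na :: "sl2 \<Rightarrow> (nat \<Rightarrow> 'k::field) \<Rightarrow> nat \<Rightarrow> 'k" where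
  "na Fop a n = (if n = 0 then 0 else a (n - 1))"
| "na Hop a n = (4 - 2 * of_nat n) * a n"
| "na Eop a n = of_nat ((n+1) * (4-n)) * a (n+1)"

lemma lessThan5: "{..<5::nat} = {0,1,2,3,4}" by auto

lemma D_span: "D Z (spanc a) = spanc (na Z a)"
proof (intro ext)
  fix X Y
  show "D Z (spanc a) X Y = spanc (na Z a) X Y"
    by (cases Z; cases X; cases Y; simp add: D_def spanc_def cc_def ad_def UNIV_sl2 lessThan5 algebra_simps eval_nat_numeral)
qed

lemma vec_spanc: "vec j j' ks (spanc a) = (\<lambda>w. \<Sum>n<5. a n * vec j j' ks (cc n) w)"
  unfolding vec_def spanc_def
  by (simp add: cc_def UNIV_sl2 lessThan5 algebra_simps)

lemma mono_s: "mono (word j j' ks Eop Eop) = vec j j' ks (cc 0)"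
  unfolding vec_def by (simp add: cc_def UNIV_sl2)

lemma act_seq_span: "\<exists>a::nat \<Rightarrow> 'k::field. act_seq xs (mono (word j j' ks Eop Eop)) = vec j j' ks (spanc a)"
proof (induction xs)
  case Nil
  have sp: "spanc (\<lambda>n. if n = 0 then (1::'k) else 0) = cc 0"
    unfolding spanc_def by (simp add: lessThan5)
  show ?case unfolding act_seq_def by (rule exI[of _ "\<lambda>n. if n = 0 then (1::'k) else 0"]) (simp add: sp mono_s)
next
  case (Cons x xs)
  then obtain a :: "nat \<Rightarrow> 'k" where "act_seq xs (mono (word j j' ks Eop Eop)) = vec j j' ks (spanc a)" by blast
  then have "act_seq (x#xs) (mono (word j j' ks Eop Eop)) = vec j j' ks (spanc (na x a))"
    by (simp add: act_seq_Cons act_vec D_span)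
  then show ?case by blast
qed

lemma act_seq_F: "act_seq (replicate n Fop) (mono (word j j' ks Eop Eop)) = vec j j' ks (cc n)"
proof (induction n)
  case 0
  then show ?case by (simp add: act_seq_def mono_s)
next
  case (Suc n)
  then show ?case by (simp add: act_seq_Cons act_vec D_F_cc)
qed

lemma vec_zero: "vec j j' ks (\<lambda>X Y. 0) = (\<lambda>w. 0)"
  unfolding vec_def by simp

lemma vec_smult: "vec j j' ks (\<lambda>X Y. a * c X Y) = (\<lambda>w. a * vec j j' ks c w)"
  unfolding vec_def by (simp add: sum_distrib_left mult.assoc)

lemma s_TU:
  assumes "j \<in> J" "j' \<in> J" "set ks \<subseteq> I"
  shows "(mono (word j j' ks Eop Eop) :: _ \<Rightarrow> 'k::field) \<in> TU I J"
proof -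
  have "{w. (mono (word j j' ks Eop Eop) w :: 'k) \<noteq> 0} \<subseteq> {word j j' ks Eop Eop}" by (auto simp: mono_def)
  then have "finite {w. (mono (word j j' ks Eop Eop) w :: 'k) \<noteq> 0}" using finite_subset by blast
  moreover have "set (word j j' ks Eop Eop) \<subseteq> alphabet I J"
    using assms unfolding word_def alphabet_def by auto
  ultimately show ?thesis unfolding TU_def by (auto simp: mono_def)
qed

lemma s_bad:
  assumes "j \<in> J" "j' \<in> J" "set ks \<subseteq> I"
  shows "act_seq (replicate n Fop) (mono (word j j' ks Eop Eop)) \<in> (bad_isotypic I J :: (_ \<Rightarrow> 'k::field_char_0) set)"
proof -
  let ?s = "mono (word j j' ks Eop Eop) :: _ \<Rightarrow> 'k"
  have E: "act Eop ?s = (\<lambda>w. 0)"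
    unfolding mono_s act_vec D_E_cc0 vec_zero ..
  have H: "act Hop ?s = (\<lambda>w. of_nat 4 * ?s w)"
    unfolding mono_s act_vec D_H_cc vec_smult by simp
  have "act_seq (replicate n Fop) ?s \<in> {act_seq (replicate n Fop) v | n v m.
      v \<in> TU I J \<and> m \<noteq> 0 \<and> m \<noteq> (2::nat) \<and>
      act Eop v = (\<lambda>w. 0) \<and> act Hop v = (\<lambda>w. of_nat m * v w)}"
    apply (rule CollectI)
    apply (rule exI[of _ n])
    apply (rule exI[of _ ?s])
    apply (rule exI[of _ "4::nat"])
    using s_TU[OF assms] E H by simp
  then show ?thesis unfolding bad_isotypic_def by (rule lspan_base)
qed

lemma eB_word: "[E j] @ map Sc ks @ [E j'] = word j j' ks Eop Eop"
  unfolding word_def by simp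

lemma RHS_sub_LHS:
  "ideal_gen I J (submod_gen (eBTAeB I J)) \<subseteq> (ideal_gen I J (bad_isotypic I J) :: (_ \<Rightarrow> 'k::field_char_0) set)"
proof (rule ideal_gen_subset)
  have gens: "{act_seq xs s | xs s. s \<in> (eBTAeB I J :: (_ \<Rightarrow> 'k) set)} \<subseteq> ideal_gen I J (bad_isotypic I J)"
  proof
    fix x assume "x \<in> {act_seq xs s | xs s. s \<in> (eBTAeB I J :: (_ \<Rightarrow> 'k) set)}"
    then obtain xs s where xs: "x = act_seq xs s" "s \<in> (eBTAeB I J :: (_ \<Rightarrow> 'k) set)" by blast
    from xs(2) obtain j j' ks where s: "s = mono (word j j' ks Eop Eop)" "j \<in> J" "j' \<in> J" "set ks \<subseteq> I"
      unfolding eBTAeB_def eB_word by blast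
    have x: "x = act_seq xs (mono (word j j' ks Eop Eop))" "j \<in> J" "j' \<in> J" "set ks \<subseteq> I"
      using xs s by auto
    obtain a :: "nat \<Rightarrow> 'k" where a: "act_seq xs (mono (word j j' ks Eop Eop)) = vec j j' ks (spanc a)"
      using act_seq_span[of xs j j' ks] by blast
    have "x = (\<lambda>w. \<Sum>n<5. a n * act_seq (replicate n Fop) (mono (word j j' ks Eop Eop)) w)"
      unfolding x(1) a vec_spanc act_seq_F ..
    moreover have "\<forall>n\<in>{..<5}. act_seq (replicate n Fop) (mono (word j j' ks Eop Eop)) \<in> (ideal_gen I J (bad_isotypic I J) :: (_ \<Rightarrow> 'k) set)"
      using s_bad[OF x(2-4)] ideal_gen_base by blast
    ultimately show "x \<in> ideal_gen I J (bad_isotypic I J)"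
      using ideal_sum[of "{..<5}" "\<lambda>n. act_seq (replicate n Fop) (mono (word j j' ks Eop Eop))" I J "bad_isotypic I J" a] by simp
  qed
  have "lspan {act_seq xs s | xs s. s \<in> (eBTAeB I J :: (_ \<Rightarrow> 'k) set)} \<subseteq> ideal_gen I J (bad_isotypic I J)"
    using gens unfolding ideal_gen_def[of I J "bad_isotypic I J"] by (rule lspan_mono)
  then show "submod_gen (eBTAeB I J) \<subseteq> (ideal_gen I J (bad_isotypic I J) :: (_ \<Rightarrow> 'k) set)"
    unfolding submod_gen_def .
qed


fun dl :: "('i,'j) letter \<Rightarrow> int" where
  "dl (E j) = 1" | "dl (F j) = -1" | "dl (H j) = 0" | "dl (Sc i) = 0"

fun delta :: "('i,'j) letter list \<Rightarrow> int" where
  "delta [] = 0" | "delta (c#w) = dl c + delta w"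

lemma delta_append[simp]: "delta (a @ b) = delta a + delta b"
  by (induction a) auto

lemma delta_Sc[simp]: "delta (map Sc ks) = 0"
  by (induction ks) auto

lemma actl_H: "actl Hop c d = (if d = c then 2 * of_int (dl c) else (0::'k::field))"
  by (cases c) auto

lemma actw_H: "actw Hop w w' = (if w' = w then 2 * of_int (delta w) else (0::'k::field))"
proof (induction w arbitrary: w')
  case Nil
  then show ?case by (simp add: actw_Nil)
next
  case (Cons c m)
  show ?case
  proof (cases w')
    case Nil
    then show ?thesis by (simp add: actw_Nil2)
  next
    case (Cons d w)
    then show ?thesis using Cons.IH by (auto simp: actw_cons actl_H algebra_simps)
  qed
qed

lemma act_H:
  assumes "fsupp (v :: _ \<Rightarrow> 'k::field)"
  shows "act Hop v w = 2 * of_int (delta w) * v w"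
proof -
  have S: "finite {w. v w \<noteq> 0}" using assms unfolding fsupp_def .
  have "act Hop v w = (\<Sum>w0\<in>{w. v w \<noteq> 0}. v w0 * actw Hop w0 w)"
    by (rule act_superset[OF S]) simp
  also have "\<dots> = (\<Sum>w0\<in>{w. v w \<noteq> 0}. if w = w0 then v w0 * (2 * of_int (delta w0)) else 0)"
    by (rule sum.cong) (auto simp: actw_H)
  also have "\<dots> = 2 * of_int (delta w) * v w"
    using S by (auto simp: sum.delta)
  finally show ?thesis .
qed


lemma fs_eB: "\<forall>s\<in>(eBTAeB I J :: (_ \<Rightarrow> 'k::field) set). fsupp s"
  unfolding eBTAeB_def using fsupp_mono by blast

lemma R_actx: "x \<in> ideal_gen I J (submod_gen (eBTAeB I J)) \<Longrightarrow> act X x \<in> ideal_gen I J (submod_gen (eBTAeB I J))"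
  by (rule R_act[OF fs_eB])

lemma R_act_seq: "x \<in> ideal_gen I J (submod_gen (eBTAeB I J)) \<Longrightarrow> act_seq xs x \<in> ideal_gen I J (submod_gen (eBTAeB I J))"
  by (induction xs) (auto simp: act_seq_def intro: R_actx)

lemma lmulR: "(mono w :: _ \<Rightarrow> 'k::field) \<in> ideal_gen I J (submod_gen (eBTAeB I J)) \<Longrightarrow> c \<in> alphabet I J \<Longrightarrow> (mono (c#w) :: _ \<Rightarrow> 'k) \<in> ideal_gen I J (submod_gen (eBTAeB I J))"
proof -
  assume a: "(mono w :: _ \<Rightarrow> 'k) \<in> ideal_gen I J (submod_gen (eBTAeB I J))" "c \<in> alphabet I J"
  have "sandwich [c] [] (mono w :: _ \<Rightarrow> 'k) \<in> ideal_gen I J (submod_gen (eBTAeB I J))" using ideal_gen_sandwich[OF a(1), of "[c]" "[]"] a(2) by simp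
  then show ?thesis by (simp add: sandwich_mono)
qed

lemma rmulR: "(mono w :: _ \<Rightarrow> 'k::field) \<in> ideal_gen I J (submod_gen (eBTAeB I J)) \<Longrightarrow> c \<in> alphabet I J \<Longrightarrow> (mono (w@[c]) :: _ \<Rightarrow> 'k) \<in> ideal_gen I J (submod_gen (eBTAeB I J))"
proof -
  assume a: "(mono w :: _ \<Rightarrow> 'k) \<in> ideal_gen I J (submod_gen (eBTAeB I J))" "c \<in> alphabet I J"
  have "sandwich [] [c] (mono w :: _ \<Rightarrow> 'k) \<in> ideal_gen I J (submod_gen (eBTAeB I J))" using ideal_gen_sandwich[OF a(1), of "[]" "[c]"] a(2) by simp
  then show ?thesis by (simp add: sandwich_mono)
qed

lemma s_sub: "j \<in> J \<Longrightarrow> j' \<in> J \<Longrightarrow> set ks \<subseteq> I \<Longrightarrow>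
   act_seq xs (mono (word j j' ks Eop Eop)) \<in> submod_gen (eBTAeB I J :: (_ \<Rightarrow> 'k::field) set)"
  by (rule submod_base) (unfold eBTAeB_def eB_word[symmetric], blast)

lemma vec_cc1: "vec j j' ks (cc 1) = (\<lambda>w. (-1) * mono (word j j' ks Hop Eop) w + (-1) * (mono (word j j' ks Eop Hop) w :: 'k::field))"
  unfolding vec_def by (simp add: cc_def UNIV_sl2 algebra_simps)

lemma vec_cc2: "vec j j' ks (cc 2) = (\<lambda>w. 2 * mono (word j j' ks Hop Hop) w + (-2) * mono (word j j' ks Fop Eop) w
    + (-2) * (mono (word j j' ks Eop Fop) w :: 'k::field))"
  unfolding vec_def by (simp add: cc_def UNIV_sl2)

lemma sandwich_lin2: "sandwich u v (\<lambda>w. a * f w + b * g w) = (\<lambda>w. a * sandwich u v f w + b * sandwich u v g w)"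
proof
  fix w show "sandwich u v (\<lambda>w. a * f w + b * g w) w = a * sandwich u v f w + b * sandwich u v g w"
    by (cases "\<exists>m. w = u @ m @ v") (auto simp: sandwich_app sandwich_notapp)
qed

lemma sandwich_lin3: "sandwich u v (\<lambda>w. a * f w + b * g w + c * h w) = (\<lambda>w. a * sandwich u v f w + b * sandwich u v g w + c * sandwich u v h w)"
proof
  fix w show "sandwich u v (\<lambda>w. a * f w + b * g w + c * h w) w = a * sandwich u v f w + b * sandwich u v g w + c * sandwich u v h w"
    by (cases "\<exists>m. w = u @ m @ v") (auto simp: sandwich_app sandwich_notapp)
qed

lemma Sc_split: "\<exists>ks rest. w = map Sc ks @ rest \<and> (rest = [] \<or> (\<exists>z rest'. rest = z # rest' \<and> (\<forall>i. z \<noteq> Sc i)))"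
proof (induction w)
  case Nil
  then show ?case by auto
next
  case (Cons c w)
  show ?case
  proof (cases "\<exists>i. c = Sc i")
    case True
    then obtain i where i: "c = Sc i" by blast
    obtain ks rest where "w = map Sc ks @ rest \<and> (rest = [] \<or> (\<exists>z rest'. rest = z # rest' \<and> (\<forall>i. z \<noteq> Sc i)))"
      using Cons.IH by blast
    then show ?thesis using i by (intro exI[of _ "i#ks"] exI[of _ rest]) auto
  next
    case False
    then show ?thesis by (intro exI[of _ "[]"] exI[of _ "c#w"]) auto
  qed
qed

lemma Sc_splitE:
  obtains ks rest where "w = map Sc ks @ rest" "rest = [] \<or> (\<exists>z rest'. rest = z # rest' \<and> (\<forall>i. z \<noteq> Sc i))"
proof -
  from Sc_split[of w] obtain ks rest where "w = map Sc ks @ rest \<and> (rest = [] \<or> (\<exists>z rest'. rest = z # rest' \<and> (\<forall>i. z \<noteq> Sc i)))"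
    by (elim exE)
  then show ?thesis using that by (elim conjE)
qed

lemma Sc_alph: "set (map Sc ks) \<subseteq> alphabet I J \<Longrightarrow> set ks \<subseteq> I"
  unfolding alphabet_def by auto

lemma alph_E: "E j \<in> alphabet I J \<longleftrightarrow> j \<in> J"
  unfolding alphabet_def by auto
lemma alph_H: "H j \<in> alphabet I J \<longleftrightarrow> j \<in> J"
  unfolding alphabet_def by auto
lemma alph_F: "F j \<in> alphabet I J \<longleftrightarrow> j \<in> J"
  unfolding alphabet_def by auto


lemma letter_vec:
  assumes "z \<in> alphabet I J" "\<forall>i. z \<noteq> Sc i"
  shows "\<exists>X j2. z = lt X j2 \<and> j2 \<in> J"
proof (cases z)
  case (E j) then show ?thesis by (intro exI[of _ Eop] exI[of _ j]) (use assms in \<open>auto simp: alph_E\<close>)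
next
  case (H j) then show ?thesis by (intro exI[of _ Hop] exI[of _ j]) (use assms in \<open>auto simp: alph_H\<close>)
next
  case (F j) then show ?thesis by (intro exI[of _ Fop] exI[of _ j]) (use assms in \<open>auto simp: alph_F\<close>)
qed (use assms in auto)

lemma dl_ge1: "dl c \<ge> 1 \<Longrightarrow> \<exists>j. c = E j"
  by (cases c) auto

lemma mono_R:
  fixes I :: "'i set" and J :: "'j set"
  shows "set w \<subseteq> alphabet I J \<Longrightarrow> delta w \<ge> 2 \<Longrightarrow>
    (mono w :: _ \<Rightarrow> 'k::field_char_0) \<in> ideal_gen I J (submod_gen (eBTAeB I J))"
proof (induction "length w" arbitrary: w rule: less_induct)
  case less
  let ?R = "ideal_gen I J (submod_gen (eBTAeB I J)) :: (_ \<Rightarrow> 'k) set"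
  have IH: "\<And>u. length u < length w \<Longrightarrow> set u \<subseteq> alphabet I J \<Longrightarrow> delta u \<ge> 2 \<Longrightarrow> (mono u :: _ \<Rightarrow> 'k) \<in> ?R"
    using less.hyps by blast
  have A: "set w \<subseteq> alphabet I J" and d: "delta w \<ge> 2" using less.prems by auto
  obtain c w1 where w: "w = c # w1" using d by (cases w) auto
  show ?case
  proof (cases "delta w1 \<ge> 2")
    case True
    have "(mono w1 :: _ \<Rightarrow> 'k) \<in> ?R" by (rule IH) (use True A w in auto)
    then show ?thesis unfolding w by (rule lmulR) (use A w in auto)
  next
    case False
    then have "dl c \<ge> 1" using d w by simp
    then obtain j where cj: "c = E j" using dl_ge1 by blast
    have d1: "delta w1 = 1" using d w cj False by simp
    obtain w2 c' where w1: "w1 = w2 @ [c']" using d1 by (cases w1 rule: rev_exhaust) auto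
    show ?thesis
    proof (cases "delta (c # w2) \<ge> 2")
      case True
      have "(mono (c # w2) :: _ \<Rightarrow> 'k) \<in> ?R" by (rule IH) (use True A w w1 in auto)
      then have "(mono ((c # w2) @ [c']) :: _ \<Rightarrow> 'k) \<in> ?R" by (rule rmulR) (use A w w1 in auto)
      then show ?thesis using w w1 by simp
    next
      case False2: False
      then have "dl c' \<ge> 1" using d w w1 by simp
      then obtain j' where cj': "c' = E j'" using dl_ge1 by blast
      have d2: "delta w2 = 0" using d w w1 cj cj' False2 by simp
      have jJ: "j \<in> J" "j' \<in> J" using A w w1 cj cj' by (auto simp: alph_E)
      have A2: "set w2 \<subseteq> alphabet I J" using A w w1 by auto
      obtain ks rest where sp: "w2 = map Sc ks @ rest" "rest = [] \<or> (\<exists>z rest'. rest = z # rest' \<and> (\<forall>i. z \<noteq> Sc i))"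
        by (rule Sc_splitE[of w2])
      have ks: "set ks \<subseteq> I" by (rule Sc_alph[of ks I J]) (use A2 sp(1) in auto)
      have wform: "w = E j # map Sc ks @ rest @ [E j']" using w w1 cj cj' sp(1) by simp
      show ?thesis
      proof (cases "rest = []")
        case True
        have "w = word j j' ks Eop Eop" using wform True by (simp add: word_def)
        moreover have "act_seq [] (mono (word j j' ks Eop Eop) :: _ \<Rightarrow> 'k) \<in> submod_gen (eBTAeB I J)"
          by (rule s_sub[OF jJ ks])
        ultimately show ?thesis using ideal_gen_base by (simp add: act_seq_def)
      next
        case False
        then obtain z rest' where zr: "rest = z # rest'" "\<forall>i. z \<noteq> Sc i" using sp(2) by blast
        have zA: "z \<in> alphabet I J" using A2 sp(1) zr by auto
        obtain X j2 where zX: "z = lt X j2" "j2 \<in> J" using letter_vec[OF zA zr(2)] by blast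
        define t where "t = rest' @ [E j']"
        have At: "set t \<subseteq> alphabet I J" using A w w1 cj' sp(1) zr unfolding t_def by auto
        have dr: "delta rest' = - dl z" using d2 sp(1) zr by simp
        have wt: "w = E j # map Sc ks @ z # t" using wform zr unfolding t_def by simp
        have sE: "act_seq xs (mono (word j j2 ks Eop Eop) :: _ \<Rightarrow> 'k) \<in> submod_gen (eBTAeB I J)" for xs
          by (rule s_sub[OF jJ(1) zX(2) ks])
        show ?thesis
        proof (cases X)
          case Eop
          have "sandwich [] t (act_seq [] (mono (word j j2 ks Eop Eop) :: _ \<Rightarrow> 'k)) \<in> ?R"
            by (rule ideal_gen_gen[OF sE]) (use At in auto)
          moreover have "word j j2 ks Eop Eop @ t = w" using wt zX Eop by (simp add: word_def)
          ultimately show ?thesis by (simp add: act_seq_def sandwich_mono)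
        next
          case Hop
          define u where "u = map Sc ks @ E j2 # t"
          have g: "sandwich [] t (act_seq [Fop] (mono (word j j2 ks Eop Eop) :: _ \<Rightarrow> 'k)) \<in> ?R"
            by (rule ideal_gen_gen[OF sE]) (use At in auto)
          have "act_seq [Fop] (mono (word j j2 ks Eop Eop) :: _ \<Rightarrow> 'k) = vec j j2 ks (cc 1)"
            using act_seq_F[of 1 j j2 ks] by simp
          then have a1: "act_seq [Fop] (mono (word j j2 ks Eop Eop) :: _ \<Rightarrow> 'k) =
             (\<lambda>w. (-1) * mono (word j j2 ks Hop Eop) w + (-1) * (mono (word j j2 ks Eop Hop) w :: 'k))"
            by (simp only: vec_cc1)
          have geq: "sandwich [] t (act_seq [Fop] (mono (word j j2 ks Eop Eop) :: _ \<Rightarrow> 'k)) =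
              (\<lambda>x. (-1) * mono (H j # u) x + (-1) * mono w x)"
            unfolding a1 sandwich_lin2 sandwich_mono using wt zX Hop by (simp add: word_def u_def)
          have "(mono u :: _ \<Rightarrow> 'k) \<in> ?R"
            by (rule IH) (use wt At A zX Hop dr jJ zr sp(1) in \<open>auto simp: u_def alph_E t_def\<close>)
          then have hu: "(mono (H j # u) :: _ \<Rightarrow> 'k) \<in> ?R" by (rule lmulR) (use jJ in \<open>simp add: alph_H\<close>)
          have "(\<lambda>x. (-1) * sandwich [] t (act_seq [Fop] (mono (word j j2 ks Eop Eop) :: _ \<Rightarrow> 'k)) x + (-1) * mono (H j # u) x) \<in> ?R"
            by (rule ideal_add[OF ideal_smult[OF g] ideal_smult[OF hu]])
          moreover have "(\<lambda>x. (-1) * sandwich [] t (act_seq [Fop] (mono (word j j2 ks Eop Eop) :: _ \<Rightarrow> 'k)) x + (-1) * mono (H j # u) x) = mono w"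
            unfolding geq by (simp add: algebra_simps)
          ultimately show ?thesis by simp
        next
          case Fop
          define u1 where "u1 = map Sc ks @ H j2 # t"
          define u2 where "u2 = map Sc ks @ E j2 # t"
          have g: "sandwich [] t (act_seq [Fop, Fop] (mono (word j j2 ks Eop Eop) :: _ \<Rightarrow> 'k)) \<in> ?R"
            by (rule ideal_gen_gen[OF sE]) (use At in auto)
          have "act_seq [Fop, Fop] (mono (word j j2 ks Eop Eop) :: _ \<Rightarrow> 'k) = vec j j2 ks (cc 2)"
            using act_seq_F[of 2 j j2 ks] by (simp add: numeral_2_eq_2)
          then have a2: "act_seq [Fop, Fop] (mono (word j j2 ks Eop Eop) :: _ \<Rightarrow> 'k) =
             (\<lambda>w. 2 * mono (word j j2 ks Hop Hop) w + (-2) * mono (word j j2 ks Fop Eop) w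
              + (-2) * (mono (word j j2 ks Eop Fop) w :: 'k))"
            by (simp only: vec_cc2)
          have geq: "sandwich [] t (act_seq [Fop, Fop] (mono (word j j2 ks Eop Eop) :: _ \<Rightarrow> 'k)) =
              (\<lambda>x. 2 * mono (H j # u1) x + (-2) * mono (F j # u2) x + (-2) * mono w x)"
            unfolding a2 sandwich_lin3 sandwich_mono using wt zX Fop by (simp add: word_def u1_def u2_def)
          have "(mono u1 :: _ \<Rightarrow> 'k) \<in> ?R"
            by (rule IH) (use wt At A zX Fop dr jJ zr sp(1) in \<open>auto simp: u1_def alph_E alph_H t_def\<close>)
          then have h1: "(mono (H j # u1) :: _ \<Rightarrow> 'k) \<in> ?R" by (rule lmulR) (use jJ in \<open>simp add: alph_H\<close>)
          have "(mono u2 :: _ \<Rightarrow> 'k) \<in> ?R"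
            by (rule IH) (use wt At A zX Fop dr jJ zr sp(1) in \<open>auto simp: u2_def alph_E t_def\<close>)
          then have h2: "(mono (F j # u2) :: _ \<Rightarrow> 'k) \<in> ?R" by (rule lmulR) (use jJ in \<open>simp add: alph_F\<close>)
          have "(\<lambda>x. (-1/2) * sandwich [] t (act_seq [Fop, Fop] (mono (word j j2 ks Eop Eop) :: _ \<Rightarrow> 'k)) x
              + (1 * mono (H j # u1) x + (-1) * mono (F j # u2) x)) \<in> ?R"
            by (rule ideal_add[OF ideal_smult[OF g] ideal_add[OF ideal_smult[OF h1] ideal_smult[OF h2]]])
          moreover have "(\<lambda>x. (-1/2) * sandwich [] t (act_seq [Fop, Fop] (mono (word j j2 ks Eop Eop) :: _ \<Rightarrow> 'k)) x
              + (1 * mono (H j # u1) x + (-1) * mono (F j # u2) x)) = mono w"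
            unfolding geq by (simp add: algebra_simps)
          ultimately show ?thesis by simp
        qed
      qed
    qed
  qed
qed


lemma v_R:
  fixes v :: "('i,'j) letter list \<Rightarrow> 'k::field_char_0"
  assumes v: "v \<in> TU I J" and m: "m \<noteq> 0" "m \<noteq> (2::nat)" and H: "act Hop v = (\<lambda>w. of_nat m * v w)"
  shows "v \<in> ideal_gen I J (submod_gen (eBTAeB I J))"
proof -
  define S where "S = {w. v w \<noteq> 0}"
  have S: "finite S" using v unfolding TU_def S_def by auto
  have fs: "fsupp v" using S unfolding fsupp_def S_def .
  have mem: "\<forall>w\<in>S. (mono w :: _ \<Rightarrow> 'k) \<in> ideal_gen I J (submod_gen (eBTAeB I J))"
  proof
    fix w assume w: "w \<in> S"
    then have vw: "v w \<noteq> 0" unfolding S_def by simp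
    have "2 * of_int (delta w) * v w = of_nat m * v w"
      using act_H[OF fs, of w] H by metis
    then have "(2 * of_int (delta w) :: 'k) = of_nat m" using vw by simp
    then have "(of_int (2 * delta w) :: 'k) = of_int (int m)" by simp
    then have e: "2 * delta w = int m" by (simp only: of_int_eq_iff)
    then have "delta w \<ge> 2" using m by presburger
    moreover have "set w \<subseteq> alphabet I J" using v vw unfolding TU_def by auto
    ultimately show "(mono w :: _ \<Rightarrow> 'k) \<in> ideal_gen I J (submod_gen (eBTAeB I J))"
      using mono_R by blast
  qed
  have "v = (\<lambda>x. \<Sum>w\<in>S. v w * mono w x)"
  proof
    fix x
    have "(\<Sum>w\<in>S. v w * mono w x) = (\<Sum>w\<in>S. if x = w then v x else 0)"
      by (rule sum.cong) (auto simp: mono_def)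
    also have "\<dots> = v x" using S by (simp add: sum.delta S_def)
    finally show "v x = (\<Sum>w\<in>S. v w * mono w x)" by simp
  qed
  also have "\<dots> \<in> ideal_gen I J (submod_gen (eBTAeB I J))"
    by (rule ideal_sum[OF S mem])
  finally show ?thesis .
qed

lemma bad_R: "(bad_isotypic I J :: (_ \<Rightarrow> 'k::field_char_0) set) \<subseteq> ideal_gen I J (submod_gen (eBTAeB I J))"
proof -
  have "{act_seq (replicate n Fop) v | n v m.
      v \<in> TU I J \<and> m \<noteq> 0 \<and> m \<noteq> (2::nat) \<and>
      act Eop v = (\<lambda>w. 0) \<and> act Hop v = (\<lambda>w. of_nat m * (v w :: 'k))} \<subseteq> ideal_gen I J (submod_gen (eBTAeB I J))"
  proof
    fix x assume "x \<in> {act_seq (replicate n Fop) v | n v m.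
      v \<in> TU I J \<and> m \<noteq> 0 \<and> m \<noteq> (2::nat) \<and>
      act Eop v = (\<lambda>w. 0) \<and> act Hop v = (\<lambda>w. of_nat m * (v w :: 'k))}"
    then obtain n v m where x: "x = act_seq (replicate n Fop) v" "v \<in> TU I J" "m \<noteq> 0" "m \<noteq> (2::nat)"
      "act Hop v = (\<lambda>w. of_nat m * (v w :: 'k))" by blast
    have "v \<in> ideal_gen I J (submod_gen (eBTAeB I J))" by (rule v_R[OF x(2-5)])
    then show "x \<in> ideal_gen I J (submod_gen (eBTAeB I J))" unfolding x(1) by (rule R_act_seq)
  qed
  then show ?thesis unfolding bad_isotypic_def ideal_gen_def[of I J "submod_gen (eBTAeB I J)"]
    by (rule lspan_mono)
qed

theorem proposition4p1:
  fixes I :: "'i set" and J :: "'j set"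
  shows "(ideal_gen I J (bad_isotypic I J) :: (('i, 'j) letter list \<Rightarrow> 'k::field_char_0) set)
         = ideal_gen I J (submod_gen (eBTAeB I J))"
proof
  show "(ideal_gen I J (bad_isotypic I J) :: (('i, 'j) letter list \<Rightarrow> 'k::field_char_0) set)
         \<subseteq> ideal_gen I J (submod_gen (eBTAeB I J))"
    by (rule ideal_gen_subset[OF bad_R])
  show "ideal_gen I J (submod_gen (eBTAeB I J))
     \<subseteq> (ideal_gen I J (bad_isotypic I J) :: (('i, 'j) letter list \<Rightarrow> 'k::field_char_0) set)"
    by (rule RHS_sub_LHS)
qed

end
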